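(* For every $n\ge0$, the map $\mathbf{Dyck}$ restricts to a bijection from the set of compacted binary trees of size $n$ onto the set of C-decorated Dyck paths of length $2n$ (i.e. C-decorated paths ending at $(n,n)$).
   Context: Binary trees are rooted plane trees in which each node is a leaf or an internal node with ordered left and right subtrees; size = number of internal nodes; postorder visits left subtree, right subtree, root. A relaxed binary tree $C$ of size $n$ is obtained from a binary tree $C_*$ with $n$ internal nodes (its spine) by keeping the left-most leaf and turning every other leaf $\ell$ into a pointer to a vertex (internal node or the left-most leaf) preceding $\ell$ in postorder; it is a DAG on the internal nodes and the left-most leaf, each internal node having a left/right out-edge to its child if that child is internal or the left-most leaf, and otherwise to the pointer's target. For a vertex $u$ let $B(u)$ be a single leaf if $u$ is the left-most leaf, and otherwise the binary tree with left/right subtrees $B(v),B(w)$ where $v,w$ are the left/right out-neighbours of $u$. $C$ is compacted if $B(u)\not\cong B(v)$ for all distinct vertices $u,v$. A horizontally decorated path is a lattice path from $(0,0)$ with steps $H=(1,0)$, $V=(0,1)$ in the region $0\le y\le x$, each $H$ step decorated by a number in $\{1,\dots,k+1\}$, $k$ its $y$-coordinate. The map $\mathbf{Dyck}$: label the internal nodes and the left-most leaf of $C_*$ in postorder by $1,\dots,n+1$. Define words recursively by $\mathbf{Path}(\text{leaf})=H$ and $\mathbf{Path}((T_1,T_2))=\mathbf{Path}(T_1)\mathbf{Path}(T_2)V$. The word $\mathbf{Path}(C_* )$ begins with the $H$ of the left-most leaf; removing it gives a path $P_0$ from $(0,0)$ to $(n,n)$ in $0\le y\le x$, whose $H$ steps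 correspond to the non-left-most leaves of $C_*$ (i.e. to pointers). Decorating each $H$ step of $P_0$ with the label of the vertex its pointer points to gives the horizontally decorated path $\mathbf{Dyck}(C)$. C-decorated paths: in a horizontally decorated path, give each $H$ step the label equal to its decoration and each $V$ step the label equal to its final $y$-coordinate plus one; write $\mathcal{L}(S)$ for the label of step $S$. To each $V$ step associate a pair $(v_1,v_2)$: $v_2=\mathcal{L}(S')$ where $S'$ is the step immediately before $V$; for $v_1$, draw the line of slope $1$ from the endpoint of $V$ in the south-west direction until it touches the path again, and let $S''$ be the last step before $V$ whose endpoint lies on this line; set $v_1=\mathcal{L}(S'')$, or $v_1=1$ if there is no such step. A C-decorated path is a horizontally decorated path such that for every occurrence of three consecutive steps $HHV$ whose two $H$ steps have decorations $h_1,h_2$, one has $(h_1,h_2)\ne(v_1,v_2)$ for every $V$ step preceding this occurrence. *)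

theory Defs
  imports Main
begin

datatype btree = Leaf | Node btree btree

text \<open>size = number of internal nodes\<close>
fun internal :: "btree \<Rightarrow> nat" where
  "internal Leaf = 0"
| "internal (Node l r) = internal l + internal r + 1"

datatype letter = HL | VL

fun Path :: "btree \<Rightarrow> letter list" where
  "Path Leaf = [HL]"
| "Path (Node l r) = Path l @ Path r @ [VL]"

text \<open>A relaxed binary tree is a pair (spine, ps) where ps lists, for the non-left-most
leaves of the spine taken in postorder, the label of the vertex the pointer points to.
Vertices (left-most leaf and internal nodes) are labelled 1..n+1 in postorder.
ptr_ok scans the postorder word after the left-most leaf; c = number of labelled
vertices seen so far; a pointer leaf may point to any of these c vertices.\<close>

fun ptr_ok :: "letter list \<Rightarrow> nat list \<Rightarrow> nat \<Rightarrow> bool" where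
  "ptr_ok [] ps c = (ps = [])"
| "ptr_ok (VL # w) ps c = ptr_ok w ps (Suc c)"
| "ptr_ok (HL # w) [] c = False"
| "ptr_ok (HL # w) (p # ps) c = (1 \<le> p \<and> p \<le> c \<and> ptr_ok w ps c)"

definition relaxed :: "btree \<Rightarrow> nat list \<Rightarrow> bool" where
  "relaxed t ps = ptr_ok (tl (Path t)) ps 1"

text \<open>Computation of the trees B(u): traverse the spine in postorder, maintaining the
list env of B(1),...,B(k) of the labelled vertices seen so far. The first leaf
(env empty) is the left-most leaf; every other leaf consumes the next pointer.\<close>

fun Bs :: "btree \<Rightarrow> nat list \<Rightarrow> btree list \<Rightarrow> btree \<times> nat list \<times> btree list" where
  "Bs Leaf ps env =
     (if env = [] then (Leaf, ps, [Leaf])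
      else (case ps of [] \<Rightarrow> (Leaf, [], env) | p # ps' \<Rightarrow> (env ! (p - 1), ps', env)))"
| "Bs (Node l r) ps env =
     (let (bl, ps1, env1) = Bs l ps env;
          (br, ps2, env2) = Bs r ps1 env1
      in (Node bl br, ps2, env2 @ [Node bl br]))"

definition Bvals :: "btree \<Rightarrow> nat list \<Rightarrow> btree list" where
  "Bvals t ps = snd (snd (Bs t ps []))"

definition compacted :: "btree \<Rightarrow> nat list \<Rightarrow> bool" where
  "compacted t ps = distinct (Bvals t ps)"

datatype step = H nat | V

fun nH :: "step list \<Rightarrow> nat" where
  "nH [] = 0"
| "nH (H d # xs) = Suc (nH xs)"
| "nH (V # xs) = nH xs"

fun nV :: "step list \<Rightarrow> nat" where
  "nV [] = 0"
| "nV (H d # xs) = nV xs"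
| "nV (V # xs) = Suc (nV xs)"

definition hdp :: "step list \<Rightarrow> bool" where
  "hdp xs = (\<forall>i < length xs.
      nV (take (Suc i) xs) \<le> nH (take (Suc i) xs) \<and>
      (\<forall>d. xs ! i = H d \<longrightarrow> 1 \<le> d \<and> d \<le> nV (take i xs) + 1))"

text \<open>Label of step i (0-based).\<close>
definition lab :: "step list \<Rightarrow> nat \<Rightarrow> nat" where
  "lab xs i = (case xs ! i of H d \<Rightarrow> d | V \<Rightarrow> nV (take (Suc i) xs) + 1)"

text \<open>x - y at the endpoint of step i: the endpoints on the slope-1 line through the
endpoint of step i are those with the same value.\<close>
definition diagv :: "step list \<Rightarrow> nat \<Rightarrow> int" where
  "diagv xs i = int (nH (take (Suc i) xs)) - int (nV (take (Suc i) xs))"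

definition v2 :: "step list \<Rightarrow> nat \<Rightarrow> nat" where
  "v2 xs i = lab xs (i - 1)"

definition v1 :: "step list \<Rightarrow> nat \<Rightarrow> nat" where
  "v1 xs i = (if \<exists>j < i. diagv xs j = diagv xs i
              then lab xs (GREATEST j. j < i \<and> diagv xs j = diagv xs i)
              else 1)"

definition C_decorated :: "step list \<Rightarrow> bool" where
  "C_decorated xs = (hdp xs \<and>
     (\<forall>i j h1 h2. i < j \<and> j + 2 < length xs \<and> xs ! i = V \<and>
        xs ! j = H h1 \<and> xs ! (j + 1) = H h2 \<and> xs ! (j + 2) = V
        \<longrightarrow> (h1, h2) \<noteq> (v1 xs i, v2 xs i)))"

fun decorate :: "letter list \<Rightarrow> nat list \<Rightarrow> step list" where
  "decorate [] ps = []"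
| "decorate (VL # w) ps = V # decorate w ps"
| "decorate (HL # w) [] = H 0 # decorate w []"
| "decorate (HL # w) (p # ps) = H p # decorate w ps"

definition Dyck :: "btree \<times> nat list \<Rightarrow> step list" where
  "Dyck C = decorate (tl (Path (fst C))) (snd C)"

end

theory Submission
  imports Defs
begin


fun cH :: "letter list \<Rightarrow> nat" where
  "cH [] = 0" | "cH (HL # w) = Suc (cH w)" | "cH (VL # w) = cH w"
fun cV :: "letter list \<Rightarrow> nat" where
  "cV [] = 0" | "cV (HL # w) = cV w" | "cV (VL # w) = Suc (cV w)"

lemma cH_app[simp]: "cH (u @ w) = cH u + cH w"
  by (induction u rule: cH.induct) auto
lemma cV_app[simp]: "cV (u @ w) = cV u + cV w"
  by (induction u rule: cV.induct) auto

lemma Path_counts: "cH (Path t) = Suc (internal t) \<and> cV (Path t) = internal t"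
  by (induction t) auto

lemma Path_ne: "Path t \<noteq> [] \<and> hd (Path t) = HL"
  by (induction t) auto

lemma Path_prefix: "0 < k \<Longrightarrow> cV (take k (Path t)) < cH (take k (Path t))"
proof (induction t arbitrary: k)
  case Leaf then show ?case by (cases k) auto
next
  case (Node l r)
  have cl: "cH (Path l) = Suc (cV (Path l))" using Path_counts[of l] by simp
  have cr: "cH (Path r) = Suc (cV (Path r))" using Path_counts[of r] by simp
  show ?case
  proof (cases "k \<le> length (Path l)")
    case True then show ?thesis using Node by simp
  next
    case False
    define k' where "k' = k - length (Path l)"
    have k': "k = length (Path l) + k'" "k' > 0" using False unfolding k'_def by auto
    show ?thesis
    proof (cases "k' \<le> length (Path r)")
      case True
      then show ?thesis using k' Node.IH(2)[of k'] cl by simp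
    next
      case False
      then have "take k (Path (Node l r)) = Path (Node l r)" using k' by simp
      then show ?thesis using cl cr by simp
    qed
  qed
qed

fun parse :: "letter list \<Rightarrow> btree list \<Rightarrow> btree list" where
  "parse [] S = S"
| "parse (HL # w) S = parse w (Leaf # S)"
| "parse (VL # w) (r # l # S) = parse w (Node l r # S)"
| "parse (VL # w) _ = []"

lemma parse_Path: "parse (Path t @ w) S = parse w (t # S)"
  by (induction t arbitrary: w S) auto

lemma Path_inj: "Path t1 = Path t2 \<Longrightarrow> t1 = t2"
  using parse_Path[of t1 "[]" "[]"] parse_Path[of t2 "[]" "[]"] by simp

lemma parse_ok:
  assumes "\<forall>k \<le> length u. cV (take k u) < cH (take k u) + length S"
  shows "concat (map Path (rev (parse u S))) = concat (map Path (rev S)) @ u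
     \<and> length (parse u S) + cV u = length S + cH u"
  using assms
proof (induction u arbitrary: S)
  case Nil then show ?case by simp
next
  case (Cons a u)
  show ?case
  proof (cases a)
    case HL
    have "\<forall>k \<le> length u. cV (take k u) < cH (take k u) + length (Leaf # S)"
    proof (intro allI impI)
      fix k assume "k \<le> length u"
      then have "cV (take (Suc k) (a # u)) < cH (take (Suc k) (a # u)) + length S"
        using Cons.prems by auto
      then show "cV (take k u) < cH (take k u) + length (Leaf # S)" using HL by simp
    qed
    then show ?thesis using Cons.IH[of "Leaf # S"] HL by simp
  next
    case VL
    have "cV (take 1 (a # u)) < cH (take 1 (a # u)) + length S"
      using Cons.prems by auto
    then have "length S \<ge> 2" using VL by simp
    then obtain r l S' where S: "S = r # l # S'"
      by (metis One_nat_def Suc_1 Suc_le_length_iff)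
    have "\<forall>k \<le> length u. cV (take k u) < cH (take k u) + length (Node l r # S')"
    proof (intro allI impI)
      fix k assume "k \<le> length u"
      then have "cV (take (Suc k) (a # u)) < cH (take (Suc k) (a # u)) + length S"
        using Cons.prems by auto
      then show "cV (take k u) < cH (take k u) + length (Node l r # S')" using VL S by simp
    qed
    then show ?thesis using Cons.IH[of "Node l r # S'"] VL S by simp
  qed
qed

lemma Path_surj:
  assumes "\<forall>k \<le> length w. cV (take k w) \<le> cH (take k w)" "cV w = cH w"
  shows "\<exists>t. Path t = HL # w"
proof -
  have "\<forall>k \<le> length w. cV (take k w) < cH (take k w) + length [Leaf]"
    using assms(1) by (simp add: less_Suc_eq_le)
  from parse_ok[OF this] assms(2)
  obtain t where "parse w [Leaf] = [t]" "Path t = HL # w"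
    by (cases "parse w [Leaf]") auto
  then show ?thesis by blast
qed



fun toL :: "step \<Rightarrow> letter" where "toL (H d) = HL" | "toL V = VL"
fun decos :: "step list \<Rightarrow> nat list" where
  "decos [] = []" | "decos (H d # xs) = d # decos xs" | "decos (V # xs) = decos xs"

lemma nH_cH: "nH xs = cH (map toL xs)"
  by (induction xs rule: nH.induct) auto
lemma nV_cV: "nV xs = cV (map toL xs)"
  by (induction xs rule: nV.induct) auto

lemma map_toL_decorate[simp]: "map toL (decorate w ps) = w"
  by (induction w ps rule: decorate.induct) auto

lemma length_decorate[simp]: "length (decorate w ps) = length w"
  using map_toL_decorate[of w ps] by (metis length_map)

lemma decorate_decos: "decorate (map toL xs) (decos xs) = xs"
  by (induction xs rule: decos.induct) auto

lemma decorate_app: "decorate (u @ w) ps = decorate u ps @ decorate w (drop (cH u) ps)"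
  by (induction u ps rule: decorate.induct) auto

lemma decorate_inj:
  "ptr_ok w ps c \<Longrightarrow> ptr_ok w' ps' c' \<Longrightarrow> decorate w ps = decorate w' ps' \<Longrightarrow> w = w' \<and> ps = ps'"
proof (induction w ps c arbitrary: w' ps' c' rule: ptr_ok.induct)
  case (1 ps c) then show ?case by (cases "(w', ps')" rule: decorate.cases) auto
next
  case (2 w ps c)
  then show ?case by (cases "(w', ps', c')" rule: ptr_ok.cases) auto
next
  case (3 w c) then show ?case by simp
next
  case (4 w p ps c)
  then show ?case by (cases "(w', ps', c')" rule: ptr_ok.cases) auto
qed

lemma ptr_ok_len: "ptr_ok w ps c \<Longrightarrow> length ps = cH w"
  by (induction w ps c rule: ptr_ok.induct) auto

lemma ptr_ok_bound:
  "ptr_ok w ps c \<Longrightarrow> i < length w \<Longrightarrow> decorate w ps ! i = H d \<Longrightarrow> 1 \<le> d \<and> d \<le> c + cV (take i w)"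
proof (induction w ps c arbitrary: i rule: ptr_ok.induct)
  case (2 w ps c)
  then show ?case by (cases i) auto
next
  case (4 w p ps c)
  then show ?case by (cases i) auto
qed auto

lemma ptr_ok_from:
  "(\<forall>i < length xs. \<forall>d. xs ! i = H d \<longrightarrow> 1 \<le> d \<and> d \<le> c + nV (take i xs)) \<Longrightarrow>
   ptr_ok (map toL xs) (decos xs) c"
proof (induction xs arbitrary: c)
  case Nil then show ?case by simp
next
  case (Cons x xs)
  show ?case
  proof (cases x)
    case (H d)
    have "1 \<le> d \<and> d \<le> c" using Cons.prems[rule_format, of 0 d] H by simp
    moreover have "\<forall>i < length xs. \<forall>d. xs ! i = H d \<longrightarrow> 1 \<le> d \<and> d \<le> c + nV (take i xs)"
    proof (intro allI impI)
      fix i d' assume "i < length xs" "xs ! i = H d'"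
      then show "1 \<le> d' \<and> d' \<le> c + nV (take i xs)"
        using Cons.prems[rule_format, of "Suc i" d'] H by simp
    qed
    ultimately show ?thesis using Cons.IH H by simp
  next
    case V
    have "\<forall>i < length xs. \<forall>d. xs ! i = H d \<longrightarrow> 1 \<le> d \<and> d \<le> Suc c + nV (take i xs)"
    proof (intro allI impI)
      fix i d' assume "i < length xs" "xs ! i = H d'"
      then show "1 \<le> d' \<and> d' \<le> Suc c + nV (take i xs)"
        using Cons.prems[rule_format, of "Suc i" d'] V by simp
    qed
    then show ?thesis using Cons.IH V by simp
  qed
qed



fun MV :: "step list \<Rightarrow> btree list \<times> btree list \<Rightarrow> btree list \<times> btree list" where
  "MV [] st = st"
| "MV (H d # xs) (S, E) = MV xs (S @ [E ! (d - 1)], E)"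
| "MV (V # xs) (S, E) = MV xs (butlast (butlast S) @ [Node (last (butlast S)) (last S)],
                              E @ [Node (last (butlast S)) (last S)])"

lemma bb_simps[simp]: "butlast (butlast (S @ [a, b])) = S" "last (butlast (S @ [a, b])) = a"
  by (induction S) auto

lemma MV_app: "MV (xs @ ys) st = MV ys (MV xs st)"
  by (induction xs st rule: MV.induct) auto

lemma Bs_MV:
  "E \<noteq> [] \<Longrightarrow> cH (Path t) \<le> length ps \<Longrightarrow> Bs t ps E = (B, ps', E') \<Longrightarrow>
   ps' = drop (cH (Path t)) ps \<and> E' \<noteq> [] \<and>
   MV (decorate (Path t) ps @ rest) (S, E) = MV rest (S @ [B], E')"
proof (induction t arbitrary: ps E B ps' E' rest S)
  case Leaf
  then obtain p ps0 where ps: "ps = p # ps0" by (cases ps) auto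
  then show ?case using Leaf by auto
next
  case (Node l r)
  obtain bl ps1 E1 where 1: "Bs l ps E = (bl, ps1, E1)" by (metis prod.exhaust)
  obtain br ps2 E2 where 2: "Bs r ps1 E1 = (br, ps2, E2)" by (metis prod.exhaust)
  have res: "B = Node bl br" "ps' = ps2" "E' = E2 @ [Node bl br]"
    using Node.prems(3) 1 2 by auto
  have hl: "cH (Path l) \<le> length ps" using Node.prems(2) by simp
  note IHl = Node.IH(1)[OF Node.prems(1) hl 1]
  have hr: "cH (Path r) \<le> length ps1" using Node.prems(2) IHl by simp
  note IHr = Node.IH(2)[OF conjunct1[OF conjunct2[OF IHl]] hr 2]
  have "decorate (Path (Node l r)) ps @ rest =
        decorate (Path l) ps @ (decorate (Path r) ps1 @ (decorate [VL] ps2 @ rest))"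
    using IHl IHr by (simp add: decorate_app add.commute drop_drop)
  then show ?case using IHl IHr res by (simp add: MV_app drop_drop add.commute)
qed

lemma Bs_MV_top:
  "cH (tl (Path t)) \<le> length ps \<Longrightarrow> Bs t ps [] = (B, ps', E') \<Longrightarrow>
   ps' = drop (cH (tl (Path t))) ps \<and> E' \<noteq> [] \<and>
   MV (decorate (tl (Path t)) ps @ rest) ([Leaf], [Leaf]) = MV rest ([B], E')"
proof (induction t arbitrary: ps B ps' E' rest)
  case Leaf
  then show ?case by auto
next
  case (Node l r)
  obtain bl ps1 E1 where 1: "Bs l ps [] = (bl, ps1, E1)" by (metis prod.exhaust)
  obtain br ps2 E2 where 2: "Bs r ps1 E1 = (br, ps2, E2)" by (metis prod.exhaust)
  have res: "B = Node bl br" "ps' = ps2" "E' = E2 @ [Node bl br]"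
    using Node.prems(2) 1 2 by auto
  have tlP: "tl (Path (Node l r)) = tl (Path l) @ Path r @ [VL]"
    using Path_ne[of l] by (cases "Path l") auto
  have hl: "cH (tl (Path l)) \<le> length ps" using Node.prems(1) tlP by simp
  note IHl = Node.IH(1)[OF hl 1]
  have hr: "cH (Path r) \<le> length ps1" using Node.prems(1) IHl tlP by simp
  note IHr = Bs_MV[OF conjunct1[OF conjunct2[OF IHl]] hr 2]
  have "decorate (tl (Path (Node l r))) ps @ rest =
        decorate (tl (Path l)) ps @ (decorate (Path r) ps1 @ (decorate [VL] ps2 @ rest))"
    using IHl IHr tlP by (simp add: decorate_app add.commute drop_drop)
  then show ?case using IHl IHr res tlP by (simp add: MV_app drop_drop add.commute)
qed

definition Efin :: "step list \<Rightarrow> btree list" where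
  "Efin xs = snd (MV xs ([Leaf], [Leaf]))"

lemma compacted_MV:
  assumes "relaxed t ps"
  shows "compacted t ps = distinct (Efin (Dyck (t, ps)))"
proof -
  have len: "cH (tl (Path t)) \<le> length ps"
    using ptr_ok_len[of "tl (Path t)" ps 1] assms unfolding relaxed_def by simp
  obtain B ps' E' where b: "Bs t ps [] = (B, ps', E')" by (metis prod.exhaust)
  from Bs_MV_top[OF len b, of "[]"] have "MV (Dyck (t, ps)) ([Leaf], [Leaf]) = ([B], E')"
    unfolding Dyck_def by simp
  then show ?thesis unfolding compacted_def Bvals_def Efin_def using b by simp
qed



lemma nV_app[simp]: "nV (a @ b) = nV a + nV b"
  by (induction a rule: nV.induct) auto
lemma nH_app[simp]: "nH (a @ b) = nH a + nH b"
  by (induction a rule: nH.induct) auto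

lemma nV_take_Suc: "k < length xs \<Longrightarrow> nV (take (Suc k) xs) = nV (take k xs) + (if xs ! k = V then 1 else 0)"
  by (cases "xs ! k") (auto simp: take_Suc_conv_app_nth)
lemma nH_take_Suc: "k < length xs \<Longrightarrow> nH (take (Suc k) xs) = nH (take k xs) + (if xs ! k = V then 0 else 1)"
  by (cases "xs ! k") (auto simp: take_Suc_conv_app_nth)

lemma nV_take_mono: "a \<le> b \<Longrightarrow> nV (take a xs) \<le> nV (take b xs)"
proof -
  assume "a \<le> b"
  then have "take b xs = take a xs @ take (b - a) (drop a xs)"
    by (metis le_add_diff_inverse take_add)
  then show ?thesis by (metis le_add1 nV_app)
qed

lemma greatest_step:
  "(if \<exists>j<Suc k. P j then f (GREATEST j. j < Suc k \<and> P j) else c) =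
   (if P k then f k else (if \<exists>j<k. P j then f (GREATEST j. j < k \<and> P j) else c))"
proof (cases "P k")
  case True
  have "(GREATEST j. j < Suc k \<and> P j) = k"
    by (rule Greatest_equality) (use True in auto)
  then show ?thesis using True by auto
next
  case False
  then have e: "(\<lambda>j. j < Suc k \<and> P j) = (\<lambda>j. j < k \<and> P j)" using less_Suc_eq by auto
  have "(\<exists>j<Suc k. P j) = (\<exists>j<k. P j)" using False less_Suc_eq by auto
  then show ?thesis using False by (auto simp add: e)
qed

lemma lastbl:
  assumes "length S = Suc h" "h \<ge> 1"
  shows "last S = S ! h" "last (butlast S) = S ! (h - 1)" "butlast (butlast S) = take (h - 1) S"
proof -
  have ne: "S \<noteq> []" using assms by auto
  then show "last S = S ! h" using assms by (simp add: last_conv_nth)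
  have l: "length (butlast S) = h" using assms by simp
  have "butlast S \<noteq> []"
  proof
    assume "butlast S = []"
    then have "length (butlast S) = 0" by simp
    with l assms show False by simp
  qed
  then show "last (butlast S) = S ! (h - 1)" using assms l
    by (simp add: last_conv_nth nth_butlast)
  show "butlast (butlast S) = take (h - 1) S" using assms
    by (simp add: butlast_conv_take)
qed

context
  fixes xs :: "step list"
  assumes hd: "hdp xs"
begin

lemma hdp_le: "k \<le> length xs \<Longrightarrow> nV (take k xs) \<le> nH (take k xs)"
  using hd unfolding hdp_def by (cases k) auto

lemma hdp_dec: "k < length xs \<Longrightarrow> xs ! k = H d \<Longrightarrow> 1 \<le> d \<and> d \<le> nV (take k xs) + 1"
  using hd unfolding hdp_def by auto

definition hgt :: "nat \<Rightarrow> nat" where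
  "hgt k = nH (take k xs) - nV (take k xs)"

lemma hgt_Suc_V: "k < length xs \<Longrightarrow> xs ! k = V \<Longrightarrow> hgt (Suc k) = hgt k - 1 \<and> hgt k \<ge> 1"
  using hdp_le[of "Suc k"] nV_take_Suc[of k xs] nH_take_Suc[of k xs] unfolding hgt_def by auto

lemma hgt_Suc_H: "k < length xs \<Longrightarrow> xs ! k \<noteq> V \<Longrightarrow> hgt (Suc k) = Suc (hgt k)"
  using hdp_le[of "k"] nV_take_Suc[of k xs] nH_take_Suc[of k xs] unfolding hgt_def by auto

lemma diagv_hgt: "j < length xs \<Longrightarrow> diagv xs j = int (hgt (Suc j))"
  using hdp_le[of "Suc j"] unfolding hgt_def diagv_def by auto

lemma first_not_V: "0 < length xs \<Longrightarrow> xs ! 0 \<noteq> V"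
  using hdp_le[of 1] by (cases xs) auto

lemma lab_bound: "j < length xs \<Longrightarrow> 1 \<le> lab xs j \<and> lab xs j \<le> Suc (nV (take (Suc j) xs))"
  using hdp_dec[of j] nV_take_Suc[of j xs] unfolding lab_def by (cases "xs ! j") auto

definition lbl :: "nat \<Rightarrow> nat \<Rightarrow> nat" where
  "lbl k p = (if \<exists>j<k. hgt (Suc j) = p then lab xs (GREATEST j. j < k \<and> hgt (Suc j) = p) else 1)"

lemma lbl_0: "lbl 0 p = 1" unfolding lbl_def by simp

lemma lbl_Suc: "lbl (Suc k) p = (if hgt (Suc k) = p then lab xs k else lbl k p)"
  unfolding lbl_def by (rule greatest_step)

lemma lbl_bound: "k \<le> length xs \<Longrightarrow> 1 \<le> lbl k p \<and> lbl k p \<le> Suc (nV (take k xs))"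
proof (induction k)
  case 0 then show ?case by (simp add: lbl_0)
next
  case (Suc k)
  then show ?case using lab_bound[of k] nV_take_mono[of k "Suc k" xs]
    by (auto simp: lbl_Suc)
qed

definition St :: "nat \<Rightarrow> btree list \<times> btree list" where
  "St k = MV (take k xs) ([Leaf], [Leaf])"

lemma St_Suc: "k < length xs \<Longrightarrow> St (Suc k) = MV [xs ! k] (St k)"
  unfolding St_def by (simp add: take_Suc_conv_app_nth MV_app)

lemma St_grow: "k < length xs \<Longrightarrow> \<exists>X. snd (St (Suc k)) = snd (St k) @ X"
proof -
  assume k: "k < length xs"
  obtain S E where "St k = (S, E)" by (metis prod.exhaust)
  then show ?thesis using St_Suc[OF k] by (cases "xs ! k") auto
qed

lemma St_grow': "k \<le> k' \<Longrightarrow> k' \<le> length xs \<Longrightarrow> \<exists>X. snd (St k') = snd (St k) @ X"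
proof (induction k' rule: dec_induct)
  case base then show ?case by simp
next
  case (step m)
  then show ?case using St_grow[of m] by fastforce
qed

lemma inv:
  "k \<le> length xs \<Longrightarrow>
   length (fst (St k)) = Suc (hgt k) \<and> length (snd (St k)) = Suc (nV (take k xs)) \<and>
   (\<forall>p \<le> hgt k. fst (St k) ! p = snd (St k) ! (lbl k p - 1)) \<and> snd (St k) ! 0 = Leaf"
proof (induction k)
  case 0 then show ?case by (simp add: St_def hgt_def lbl_0)
next
  case (Suc k)
  then have k: "k < length xs" by simp
  obtain S E where SE: "St k = (S, E)" by (metis prod.exhaust)
  have IH: "length S = Suc (hgt k)" "length E = Suc (nV (take k xs))"
    "\<forall>p \<le> hgt k. S ! p = E ! (lbl k p - 1)" "E ! 0 = Leaf"
    using Suc SE by auto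
  show ?case
  proof (cases "xs ! k")
    case (H d)
    have St': "St (Suc k) = (S @ [E ! (d - 1)], E)" using St_Suc[OF k] SE H by simp
    have hg: "hgt (Suc k) = Suc (hgt k)" using hgt_Suc_H[OF k] H by simp
    have nv: "nV (take (Suc k) xs) = nV (take k xs)" using nV_take_Suc[OF k] H by simp
    have labk: "lab xs k = d" using H unfolding lab_def by simp
    have "\<forall>p \<le> hgt (Suc k). fst (St (Suc k)) ! p = snd (St (Suc k)) ! (lbl (Suc k) p - 1)"
    proof (intro allI impI)
      fix p assume p: "p \<le> hgt (Suc k)"
      show "fst (St (Suc k)) ! p = snd (St (Suc k)) ! (lbl (Suc k) p - 1)"
      proof (cases "p = Suc (hgt k)")
        case True then show ?thesis using St' hg labk IH by (simp add: lbl_Suc nth_append)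
      next
        case False then show ?thesis using St' hg p IH by (simp add: lbl_Suc nth_append)
      qed
    qed
    then show ?thesis using St' hg nv IH by simp
  next
    case V
    have hg: "hgt (Suc k) = hgt k - 1" "hgt k \<ge> 1" using hgt_Suc_V[OF k V] by auto
    note lb = lastbl[OF IH(1) hg(2)]
    define N where "N = Node (S ! (hgt k - 1)) (S ! hgt k)"
    have St': "St (Suc k) = (take (hgt k - 1) S @ [N], E @ [N])"
      using St_Suc[OF k] SE V lb unfolding N_def by simp
    have nv: "nV (take (Suc k) xs) = Suc (nV (take k xs))" using nV_take_Suc[OF k] V by simp
    have labk: "lab xs k = Suc (Suc (nV (take k xs)))" using V nv unfolding lab_def by simp
    have "\<forall>p \<le> hgt (Suc k). fst (St (Suc k)) ! p = snd (St (Suc k)) ! (lbl (Suc k) p - 1)"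
    proof (intro allI impI)
      fix p assume p: "p \<le> hgt (Suc k)"
      show "fst (St (Suc k)) ! p = snd (St (Suc k)) ! (lbl (Suc k) p - 1)"
      proof (cases "p = hgt k - 1")
        case True then show ?thesis using St' hg labk IH by (simp add: lbl_Suc nth_append)
      next
        case False
        then have pl: "p < hgt k - 1" using p hg by simp
        have b: "1 \<le> lbl k p \<and> lbl k p \<le> Suc (nV (take k xs))" using lbl_bound[of k p] k by simp
        have "lbl k p - 1 < length E" using b IH(2) by linarith
        then show ?thesis using St' hg pl IH by (simp add: lbl_Suc nth_append)
      qed
    qed
    then show ?thesis using St' hg nv IH by (simp add: nth_append)
  qed
qed


lemma v2_lbl: "k < length xs \<Longrightarrow> xs ! k = V \<Longrightarrow> lbl k (hgt k) = v2 xs k"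
proof -
  assume k: "k < length xs" and V: "xs ! k = V"
  have "k \<noteq> 0"
  proof
    assume "k = 0"
    then show False using first_not_V[of] k V by simp
  qed
  then obtain k0 where k0: "k = Suc k0" by (cases k) auto
  then show ?thesis unfolding v2_def by (simp add: lbl_Suc)
qed

lemma v1_lbl: "k < length xs \<Longrightarrow> xs ! k = V \<Longrightarrow> lbl k (hgt k - 1) = v1 xs k"
proof -
  assume k: "k < length xs" and V: "xs ! k = V"
  have hk: "hgt (Suc k) = hgt k - 1" using hgt_Suc_V[OF k V] by simp
  have eq: "\<And>j. j < k \<Longrightarrow> (diagv xs j = diagv xs k) = (hgt (Suc j) = hgt k - 1)"
    using diagv_hgt k hk by auto
  then have e1: "(\<lambda>j. j < k \<and> diagv xs j = diagv xs k) = (\<lambda>j. j < k \<and> hgt (Suc j) = hgt k - 1)"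
    by auto
  have e2: "(\<exists>j<k. diagv xs j = diagv xs k) = (\<exists>j<k. hgt (Suc j) = hgt k - 1)"
    using eq by auto
  show ?thesis unfolding v1_def lbl_def e1 e2 by simp
qed

lemma node_at:
  assumes i: "i < length xs" and V: "xs ! i = V"
  shows "snd (St (Suc i)) = snd (St i) @ [Node (snd (St i) ! (v1 xs i - 1)) (snd (St i) ! (v2 xs i - 1))]
    \<and> 1 \<le> v1 xs i \<and> v1 xs i \<le> Suc (nV (take i xs)) \<and> 1 \<le> v2 xs i \<and> v2 xs i \<le> Suc (nV (take i xs))"
proof -
  obtain S E where SE: "St i = (S, E)" by (metis prod.exhaust)
  have I: "length S = Suc (hgt i)" "length E = Suc (nV (take i xs))"
    "\<forall>p \<le> hgt i. S ! p = E ! (lbl i p - 1)" using inv[of i] i SE by auto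
  have hg: "hgt i \<ge> 1" using hgt_Suc_V[OF i V] by simp
  note lb = lastbl[OF I(1) hg]
  have St': "snd (St (Suc i)) = E @ [Node (S ! (hgt i - 1)) (S ! hgt i)]"
    using St_Suc[OF i] SE V lb by simp
  have a: "S ! hgt i = E ! (v2 xs i - 1)" using I(3) v2_lbl[OF i V] by simp
  have b: "S ! (hgt i - 1) = E ! (v1 xs i - 1)" using I(3) v1_lbl[OF i V] by simp
  show ?thesis using St' a b SE lbl_bound[of i "hgt i"] lbl_bound[of i "hgt i - 1"] i
      v2_lbl[OF i V] v1_lbl[OF i V] by simp
qed

lemma node_at_k:
  assumes i: "i < k" "k \<le> length xs" and V: "xs ! i = V"
  shows "snd (St k) ! nV (take (Suc i) xs) = Node (snd (St k) ! (v1 xs i - 1)) (snd (St k) ! (v2 xs i - 1))"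
proof -
  have il: "i < length xs" using i by simp
  note na = node_at[OF il V]
  have len: "length (snd (St i)) = Suc (nV (take i xs))" using inv[of i] il by simp
  have nv: "nV (take (Suc i) xs) = length (snd (St i))" using nV_take_Suc[OF il] V len by simp
  obtain X where X: "snd (St k) = snd (St (Suc i)) @ X" using St_grow'[of "Suc i" k] i by auto
  have r1: "v1 xs i - 1 < length (snd (St i))" "v2 xs i - 1 < length (snd (St i))" using na len by auto
  show ?thesis using X na nv r1 by (simp add: nth_append)
qed

end

lemma count_V: "k \<le> length xs \<Longrightarrow> 1 \<le> m \<Longrightarrow> m \<le> nV (take k xs) \<Longrightarrow>
  \<exists>i<k. xs ! i = V \<and> nV (take (Suc i) xs) = m"
proof (induction k)
  case 0 then show ?case by simp
next
  case (Suc k)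
  then have k: "k < length xs" by simp
  show ?case
  proof (cases "m \<le> nV (take k xs)")
    case True then show ?thesis using Suc by (meson Suc_leD less_Suc_eq)
  next
    case False
    then have "xs ! k = V" "m = nV (take (Suc k) xs)" using Suc.prems nV_take_Suc[OF k]
      by (auto split: if_splits)
    then show ?thesis by blast
  qed
qed

context
  fixes xs :: "step list"
  assumes hd: "hdp xs"
begin

definition PD :: "nat \<Rightarrow> bool" where
  "PD k = (\<forall>i i'. i < i' \<and> i' < k \<and> xs ! i = V \<and> xs ! i' = V \<longrightarrow>
              (v1 xs i, v2 xs i) \<noteq> (v1 xs i', v2 xs i'))"

lemma distinct_PD: "k \<le> length xs \<Longrightarrow> distinct (snd (St xs k)) = PD k"
proof (induction k)
  case 0 then show ?case unfolding St_def[OF hd] by (simp add: PD_def)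
next
  case (Suc k)
  then have k: "k < length xs" by simp
  have IH: "distinct (snd (St xs k)) = PD k" using Suc by simp
  show ?case
  proof (cases "xs ! k = V")
    case False
    have "snd (St xs (Suc k)) = snd (St xs k)"
      using St_Suc[OF hd k] False by (cases "St xs k", cases "xs ! k") auto
    moreover have "PD (Suc k) = PD k" unfolding PD_def using False less_Suc_eq by auto
    ultimately show ?thesis using IH by simp
  next
    case True
    define E where "E = snd (St xs k)"
    define N where "N = Node (E ! (v1 xs k - 1)) (E ! (v2 xs k - 1))"
    note na = node_at[OF hd k True]
    have E': "snd (St xs (Suc k)) = E @ [N]" using na unfolding E_def N_def by simp
    have len: "length E = Suc (nV (take k xs))" using inv[OF hd, of k] k unfolding E_def by simp
    have PDs: "PD (Suc k) = (PD k \<and> (\<forall>i<k. xs ! i = V \<longrightarrow> (v1 xs i, v2 xs i) \<noteq> (v1 xs k, v2 xs k)))"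
      unfolding PD_def using True less_Suc_eq by auto
    have key: "N \<in> set E \<longleftrightarrow> (\<exists>i<k. xs ! i = V \<and> (v1 xs i, v2 xs i) = (v1 xs k, v2 xs k))"
      if dE: "distinct E"
    proof
      assume "N \<in> set E"
      then obtain m where m: "m < length E" "E ! m = N" by (auto simp: in_set_conv_nth)
      have "E ! 0 = Leaf" using inv[OF hd, of k] k unfolding E_def by simp
      then have "m \<noteq> 0" using m unfolding N_def by (metis btree.distinct(1))
      then obtain i where i: "i < k" "xs ! i = V" "nV (take (Suc i) xs) = m"
        using count_V[of k xs m] m len k by auto
      have ni: "E ! m = Node (E ! (v1 xs i - 1)) (E ! (v2 xs i - 1))"
        using node_at_k[OF hd i(1) _ i(2)] k i(3) unfolding E_def by simp
      note nai = node_at[OF hd _ i(2)]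
      have bi: "1 \<le> v1 xs i" "v1 xs i \<le> Suc (nV (take i xs))" "1 \<le> v2 xs i" "v2 xs i \<le> Suc (nV (take i xs))"
        using nai i k by auto
      have mono: "nV (take i xs) \<le> nV (take k xs)" using nV_take_mono i by simp
      have e1: "E ! (v1 xs i - 1) = E ! (v1 xs k - 1)" "E ! (v2 xs i - 1) = E ! (v2 xs k - 1)"
        using ni m unfolding N_def by auto
      have "v1 xs i - 1 = v1 xs k - 1"
        using nth_eq_iff_index_eq[OF dE, of "v1 xs i - 1" "v1 xs k - 1"] e1 bi na len mono by auto
      moreover have "v2 xs i - 1 = v2 xs k - 1"
        using nth_eq_iff_index_eq[OF dE, of "v2 xs i - 1" "v2 xs k - 1"] e1 bi na len mono by auto
      ultimately show "\<exists>i<k. xs ! i = V \<and> (v1 xs i, v2 xs i) = (v1 xs k, v2 xs k)"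
        using i bi na by auto
    next
      assume "\<exists>i<k. xs ! i = V \<and> (v1 xs i, v2 xs i) = (v1 xs k, v2 xs k)"
      then obtain i where i: "i < k" "xs ! i = V" "(v1 xs i, v2 xs i) = (v1 xs k, v2 xs k)" by blast
      have ni: "E ! nV (take (Suc i) xs) = N"
        using node_at_k[OF hd i(1) _ i(2)] k i(3) unfolding E_def N_def by simp
      have "nV (take (Suc i) xs) \<le> nV (take k xs)" using nV_take_mono i by simp
      then have "nV (take (Suc i) xs) < length E" using len by simp
      then show "N \<in> set E" using ni by (metis nth_mem)
    qed
    show ?thesis
    proof (cases "distinct E")
      case True
      then show ?thesis using E' PDs IH key unfolding E_def by auto
    next
      case False
      then show ?thesis using E' PDs IH unfolding E_def by auto
    qed
  qed
qed

end



definition Cc :: "step list \<Rightarrow> bool" where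
  "Cc xs = (\<forall>i j h1 h2. i < j \<and> j + 2 < length xs \<and> xs ! i = V \<and>
        xs ! j = H h1 \<and> xs ! (j + 1) = H h2 \<and> xs ! (j + 2) = V
        \<longrightarrow> (h1, h2) \<noteq> (v1 xs i, v2 xs i))"

lemma C_dec_Cc: "C_decorated xs = (hdp xs \<and> Cc xs)"
  unfolding C_decorated_def Cc_def by simp

context
  fixes xs :: "step list"
  assumes hd: "hdp xs"
begin

lemma v1_afterH:
  assumes "Suc (Suc b) < length xs" "xs ! Suc (Suc b) = V" "xs ! Suc b \<noteq> V"
  shows "v1 xs (Suc (Suc b)) = lab xs b"
proof -
  have a: "hgt xs (Suc (Suc b)) = Suc (hgt xs (Suc b))" using hgt_Suc_H[OF hd, of "Suc b"] assms by simp
  show ?thesis using v1_lbl[OF hd assms(1,2)] a by (simp add: lbl_Suc[OF hd])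
qed

lemma lab_V: "i < length xs \<Longrightarrow> xs ! i = V \<Longrightarrow> lab xs i = Suc (Suc (nV (take i xs)))"
  using nV_take_Suc[of i xs] unfolding lab_def by simp

lemma vb: "i < length xs \<Longrightarrow> xs ! i = V \<Longrightarrow>
   1 \<le> v1 xs i \<and> v1 xs i \<le> Suc (nV (take i xs)) \<and> 1 \<le> v2 xs i \<and> v2 xs i \<le> Suc (nV (take i xs))"
  using node_at[OF hd] by blast

lemma nV_lt: "i < i' \<Longrightarrow> i' \<le> length xs \<Longrightarrow> xs ! i = V \<Longrightarrow> nV (take i xs) < nV (take i' xs)"
  using nV_take_Suc[of i xs] nV_take_mono[of "Suc i" i' xs] by simp

lemma PD_Cc: "PD xs (length xs) = Cc xs"
proof
  assume P: "PD xs (length xs)"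
  show "Cc xs" unfolding Cc_def
  proof (intro allI impI)
    fix i j h1 h2
    assume a: "i < j \<and> j + 2 < length xs \<and> xs ! i = V \<and> xs ! j = H h1 \<and> xs ! (j + 1) = H h2 \<and> xs ! (j + 2) = V"
    have "v1 xs (Suc (Suc j)) = h1" using v1_afterH[of j] a unfolding lab_def by simp
    moreover have "v2 xs (Suc (Suc j)) = h2" using a unfolding v2_def lab_def by simp
    moreover have "(v1 xs i, v2 xs i) \<noteq> (v1 xs (Suc (Suc j)), v2 xs (Suc (Suc j)))"
      using P a unfolding PD_def[OF hd] by simp
    ultimately show "(h1, h2) \<noteq> (v1 xs i, v2 xs i)" by auto
  qed
next
  assume C: "Cc xs"
  show "PD xs (length xs)" unfolding PD_def[OF hd]
  proof (intro allI impI)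
    fix i i' assume a: "i < i' \<and> i' < length xs \<and> xs ! i = V \<and> xs ! i' = V"
    then have i': "i' < length xs" "xs ! i' = V" "i < i'" "xs ! i = V" by auto
    have "i' \<noteq> 0" using a by simp
    then obtain c where c: "i' = Suc c" by (cases i') auto
    show "(v1 xs i, v2 xs i) \<noteq> (v1 xs i', v2 xs i')"
    proof (cases "xs ! c = V")
      case True
      have "v2 xs i' = Suc (Suc (nV (take c xs)))" using lab_V[of c] True c i' unfolding v2_def by simp
      moreover have "nV (take i' xs) = Suc (nV (take c xs))" using nV_take_Suc[of c xs] c i' True by simp
      moreover have "v2 xs i \<le> Suc (nV (take i xs))" using vb[of i] i' by simp
      moreover have "nV (take i xs) < nV (take i' xs)" using nV_lt[of i i'] i' by simp
      ultimately show ?thesis by simp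
    next
      case False
      then obtain h2 where h2: "xs ! c = H h2" by (cases "xs ! c") auto
      have "c \<noteq> 0" using i' c first_not_V[OF hd] h2 by (metis less_Suc0 step.distinct(1) a less_nat_zero_code)
      then obtain b where b: "c = Suc b" by (cases c) auto
      have v1i': "v1 xs i' = lab xs b" using v1_afterH[of b] i' b c False by simp
      have "i \<noteq> c" using h2 i' by auto
      then have ib: "i \<le> b" using i' b c by simp
      show ?thesis
      proof (cases "xs ! b = V")
        case True
        have "v1 xs i' = Suc (Suc (nV (take b xs)))" using lab_V[of b] True b c i' v1i' by simp
        moreover have "v1 xs i \<le> Suc (nV (take i xs))" using vb[of i] i' by simp
        moreover have "nV (take i xs) \<le> nV (take b xs)" using nV_take_mono ib by simp
        ultimately show ?thesis by simp
      next
        case False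
        then obtain h1 where h1: "xs ! b = H h1" by (cases "xs ! b") auto
        have "i \<noteq> b" using h1 i' by auto
        then have ib2: "i < b" using ib by simp
        have "(h1, h2) \<noteq> (v1 xs i, v2 xs i)"
          using C ib2 h1 h2 i' b c unfolding Cc_def by (metis add_2_eq_Suc' Suc_eq_plus1)
        moreover have "v1 xs i' = h1" using v1i' h1 unfolding lab_def by simp
        moreover have "v2 xs i' = h2" using h2 c unfolding v2_def lab_def by simp
        ultimately show ?thesis by auto
      qed
    qed
  qed
qed

lemma distinct_Cc: "distinct (Efin xs) = Cc xs"
proof -
  have "Efin xs = snd (St xs (length xs))" unfolding Efin_def St_def[OF hd] by simp
  then show ?thesis using distinct_PD[OF hd, of "length xs"] PD_Cc by simp
qed

end



lemma take_map_toL: "nV (take m xs) = cV (take m (map toL xs))" "nH (take m xs) = cH (take m (map toL xs))"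
  by (simp_all add: nV_cV nH_cH take_map)

lemma image_ok:
  assumes r: "relaxed t ps"
  shows "hdp (Dyck (t, ps)) \<and> nH (Dyck (t, ps)) = internal t \<and> nV (Dyck (t, ps)) = internal t"
proof -
  define w where "w = tl (Path t)"
  have P: "Path t = HL # w" using Path_ne[of t] unfolding w_def by (cases "Path t") auto
  have pk: "ptr_ok w ps 1" using r unfolding relaxed_def w_def by simp
  define xs where "xs = Dyck (t, ps)"
  have xs: "xs = decorate w ps" unfolding xs_def Dyck_def w_def by simp
  have mw: "map toL xs = w" using xs by simp
  have "hdp xs" unfolding hdp_def
  proof (intro allI impI conjI)
    fix i assume i: "i < length xs"
    have "cV (take (Suc (Suc i)) (Path t)) < cH (take (Suc (Suc i)) (Path t))"
      using Path_prefix[of "Suc (Suc i)" t] by simp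
    then show "nV (take (Suc i) xs) \<le> nH (take (Suc i) xs)"
      using P mw take_map_toL[of "Suc i" xs] by simp
    fix d assume "xs ! i = H d"
    then have "1 \<le> d \<and> d \<le> 1 + cV (take i w)" using ptr_ok_bound[OF pk, of i d] i xs by simp
    then show "1 \<le> d" "d \<le> nV (take i xs) + 1" using mw take_map_toL[of i xs] by auto
  qed
  moreover have "nH xs = internal t" "nV xs = internal t"
    using Path_counts[of t] P mw nH_cH[of xs] nV_cV[of xs] by auto
  ultimately show ?thesis unfolding xs_def by simp
qed

theorem proposition2p10:
  fixes n :: nat
  shows "bij_betw Dyck
           {(t, ps). internal t = n \<and> relaxed t ps \<and> compacted t ps}
           {xs. C_decorated xs \<and> nH xs = n \<and> nV xs = n}"
  unfolding bij_betw_def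
proof (intro conjI)
  show "inj_on Dyck {(t, ps). internal t = n \<and> relaxed t ps \<and> compacted t ps}"
  proof (rule inj_onI, clarsimp)
    fix t ps t' ps'
    assume r: "relaxed t ps" "relaxed t' ps'" and e: "Dyck (t, ps) = Dyck (t', ps')"
    have "tl (Path t) = tl (Path t') \<and> ps = ps'"
      using decorate_inj[of "tl (Path t)" ps 1 "tl (Path t')" ps' 1] r e
      unfolding relaxed_def Dyck_def by simp
    moreover have "Path t = hd (Path t) # tl (Path t)" "Path t' = hd (Path t') # tl (Path t')"
      using Path_ne[of t] Path_ne[of t'] by (metis list.collapse)+
    ultimately have "Path t = Path t'" "ps = ps'" using Path_ne[of t] Path_ne[of t'] by metis+
    then show "t = t' \<and> ps = ps'" using Path_inj by blast
  qed
next
  show "Dyck ` {(t, ps). internal t = n \<and> relaxed t ps \<and> compacted t ps} =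
        {xs. C_decorated xs \<and> nH xs = n \<and> nV xs = n}"
  proof
    show "Dyck ` {(t, ps). internal t = n \<and> relaxed t ps \<and> compacted t ps}
          \<subseteq> {xs. C_decorated xs \<and> nH xs = n \<and> nV xs = n}"
    proof clarsimp
      fix t ps assume a: "relaxed t ps" "compacted t ps" "n = internal t"
      note io = image_ok[OF a(1)]
      have "Cc (Dyck (t, ps))"
        using compacted_MV[OF a(1)] a(2) distinct_Cc[of "Dyck (t, ps)"] io by simp
      then show "C_decorated (Dyck (t, ps)) \<and> nH (Dyck (t, ps)) = internal t \<and> nV (Dyck (t, ps)) = internal t"
        using io C_dec_Cc by simp
    qed
  next
    show "{xs. C_decorated xs \<and> nH xs = n \<and> nV xs = n}
          \<subseteq> Dyck ` {(t, ps). internal t = n \<and> relaxed t ps \<and> compacted t ps}"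
    proof
      fix xs assume "xs \<in> {xs. C_decorated xs \<and> nH xs = n \<and> nV xs = n}"
      then have a: "C_decorated xs" "nH xs = n" "nV xs = n" by auto
      have hd: "hdp xs" and cc: "Cc xs" using a(1) C_dec_Cc by auto
      define w where "w = map toL xs"
      define ps where "ps = decos xs"
      have "\<forall>k \<le> length w. cV (take k w) \<le> cH (take k w)"
        using hdp_le[OF hd] take_map_toL unfolding w_def by simp
      moreover have "cV w = cH w" using a nV_cV nH_cH unfolding w_def by metis
      ultimately obtain t where t: "Path t = HL # w" using Path_surj by blast
      have tl: "tl (Path t) = w" using t by simp
      have D: "Dyck (t, ps) = xs" unfolding Dyck_def using tl decorate_decos unfolding w_def ps_def by simp
      have "\<forall>i < length xs. \<forall>d. xs ! i = H d \<longrightarrow> 1 \<le> d \<and> d \<le> 1 + nV (take i xs)"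
        using hdp_dec[OF hd] by auto
      then have r: "relaxed t ps" using ptr_ok_from[of xs 1] tl unfolding relaxed_def w_def ps_def by simp
      have "internal t = n" using Path_counts[of t] t a(3) nV_cV unfolding w_def by simp
      moreover have "compacted t ps" using compacted_MV[OF r] D distinct_Cc[OF hd] cc by simp
      ultimately show "xs \<in> Dyck ` {(t, ps). internal t = n \<and> relaxed t ps \<and> compacted t ps}"
        using r D by (metis (mono_tags, lifting) case_prodI image_eqI mem_Collect_eq)
    qed
  qed
qed


end
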